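(* Let $(R,\Lambda,S)$ be a generalised Renner–Coxeter system with unit group $W$. For every $r\in R$: (i) there exists a unique triple $(w_1,e,w_2)$ with $e\in\Lambda$, $w_1$ the element of minimal length of the coset $w_1W_\star(e)$, $w_2$ the element of minimal length of the coset $W(e)w_2$, such that $r=w_1ew_2$; (ii) there exists a unique triple $(v_1,e,v_2)$ with $e\in\Lambda$, $v_1$ the element of minimal length of $v_1W(e)$, $v_2$ the element of minimal length of $W_\star(e)v_2$, such that $r=v_1ev_2$.
   Context: For a monoid $R$, $E(R)$ is its set of idempotents, $G(R)$ its unit group. $R$ is factorisable if $R=E(R)G(R)=G(R)E(R)$ and idempotents commute; then $E(R)$ is a semilattice ($e\le f\iff ef=fe=e$) on which $G(R)$ acts by conjugation. For $e\in E(R)$, $W(e)=\{w\in G(R)\mid we=ew\}$, $W_\star(e)=\{w\mid we=ew=e\}$. For a Coxeter system $(W,S)$, $W_I$ is the subgroup generated by $I\subseteq S$ and lengths are Coxeter lengths (each coset of a standard parabolic subgroup has a unique element of minimal length). A generalised Renner–Coxeter system is a triple $(R,\Lambda,S)$ with: (ECS1) $R$ factorisable; (ECS2) $\Lambda\subseteq E(R)$ contains exactly one element of each $G(R)$-orbit and is closed under multiplication; (ECS3) $(G(R),S)$ is a Coxeter system; (ECS4) for $e_1\le e_2$ in $E(R)$ there are $w\in G(R)$, $f_1\le f_2$ in $\Lambda$ with $wf_iw^{-1}=e_i$; (ECS5) for $e\in\Lambda$, $W(e)$, $W_\star(e)$ are of the form $W_I$; (ECS6) with $\lambda^\star(e)=\{s\in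 S\mid se=es\ne e\}$, $e\le f$ in $\Lambda$ implies $\lambda^\star(e)\subseteq\lambda^\star(f)$. $W=G(R)$. *)

theory Defs
  imports Main
begin

text \<open>The monoid R is the type 'a of class monoid_mult (R = UNIV).\<close>

definition idempotents :: "'a::monoid_mult set" ("E\<^sub>R") where
  "idempotents = {e. e * e = e}"

definition units :: "'a::monoid_mult set" ("G\<^sub>R") where
  "units = {u. \<exists>v. u * v = 1 \<and> v * u = 1}"

definition unit_inv :: "'a::monoid_mult \<Rightarrow> 'a" where
  "unit_inv u = (THE v. u * v = 1 \<and> v * u = 1)"

definition idem_le :: "'a::monoid_mult \<Rightarrow> 'a \<Rightarrow> bool" where
  "idem_le e f \<longleftrightarrow> e * f = e \<and> f * e = e"

definition factorisable :: "'a::monoid_mult itself \<Rightarrow> bool" where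
  "factorisable _ \<longleftrightarrow>
     (UNIV :: 'a set) = {e * g | e g. e \<in> idempotents \<and> g \<in> units} \<and>
     (UNIV :: 'a set) = {g * e | e g. e \<in> idempotents \<and> g \<in> units} \<and>
     (\<forall>e\<in>(idempotents :: 'a set). \<forall>f\<in>idempotents. e * f = f * e)"

definition W_of :: "'a::monoid_mult \<Rightarrow> 'a set" where
  "W_of e = {w \<in> units. w * e = e * w}"

definition Wstar_of :: "'a::monoid_mult \<Rightarrow> 'a set" where
  "Wstar_of e = {w \<in> units. w * e = e \<and> e * w = e}"

text \<open>Relators of the Coxeter presentation: (s t)^m for s, t in S and m the
  order of s t (any positive k with (st)^k = 1; these are consequences of
  the one with k = m). For s = t, k = 1 gives s s = 1.\<close>
definition cox_relators :: "'a::monoid_mult set \<Rightarrow> 'a list set" where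
  "cox_relators S = {concat (replicate k [s, t]) | s t k.
       s \<in> S \<and> t \<in> S \<and> 0 < k \<and> (s * t) ^ k = 1}"

inductive cox_equiv :: "'a::monoid_mult set \<Rightarrow> 'a list \<Rightarrow> 'a list \<Rightarrow> bool"
  for S where
  refl: "cox_equiv S xs xs"
| sym: "cox_equiv S xs ys \<Longrightarrow> cox_equiv S ys xs"
| trans: "cox_equiv S xs ys \<Longrightarrow> cox_equiv S ys zs \<Longrightarrow> cox_equiv S xs zs"
| rel: "r \<in> cox_relators S \<Longrightarrow> cox_equiv S (xs @ r @ ys) (xs @ ys)"

text \<open>(G(R), S) is a Coxeter system: S is a set of involutions (different from 1)
  generating the unit group, and the unit group is presented by the generators S
  subject to the relations (st)^{m(s,t)} = 1, i.e. every word over S whose product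
  is 1 is a consequence of the Coxeter relations.\<close>
definition coxeter_system :: "'a::monoid_mult set \<Rightarrow> 'a set \<Rightarrow> bool" where
  "coxeter_system W S \<longleftrightarrow>
     S \<subseteq> W \<and> (\<forall>s\<in>S. s \<noteq> 1 \<and> s * s = 1) \<and>
     (\<forall>w\<in>W. \<exists>ws. set ws \<subseteq> S \<and> prod_list ws = w) \<and>
     (\<forall>ws. set ws \<subseteq> S \<longrightarrow> prod_list ws \<in> W) \<and>
     (\<forall>ws. set ws \<subseteq> S \<and> prod_list ws = 1 \<longrightarrow> cox_equiv S ws [])"

definition cox_length :: "'a::monoid_mult set \<Rightarrow> 'a \<Rightarrow> nat" where
  "cox_length S w = (LEAST n. \<exists>ws. length ws = n \<and> set ws \<subseteq> S \<and> prod_list ws = w)"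

definition parabolic :: "'a::monoid_mult set \<Rightarrow> 'a set" where
  "parabolic I = {prod_list ws | ws. set ws \<subseteq> I}"

definition min_left_coset :: "'a::monoid_mult set \<Rightarrow> 'a \<Rightarrow> 'a set \<Rightarrow> bool" where
  "min_left_coset S w H \<longleftrightarrow>
     (\<forall>x \<in> (\<lambda>h. w * h) ` H. x \<noteq> w \<longrightarrow> cox_length S w < cox_length S x)"

definition min_right_coset :: "'a::monoid_mult set \<Rightarrow> 'a \<Rightarrow> 'a set \<Rightarrow> bool" where
  "min_right_coset S w H \<longleftrightarrow>
     (\<forall>x \<in> (\<lambda>h. h * w) ` H. x \<noteq> w \<longrightarrow> cox_length S w < cox_length S x)"

definition lambda_star :: "'a::monoid_mult set \<Rightarrow> 'a \<Rightarrow> 'a set" where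
  "lambda_star S e = {s \<in> S. s * e = e * s \<and> s * e \<noteq> e}"

definition gen_renner_coxeter :: "'a::monoid_mult set \<Rightarrow> 'a set \<Rightarrow> bool" where
  "gen_renner_coxeter \<Lambda> S \<longleftrightarrow>
     factorisable TYPE('a) \<and>
     \<Lambda> \<subseteq> idempotents \<and>
     (\<forall>e\<in>idempotents. \<exists>!f. f \<in> \<Lambda> \<and> (\<exists>w\<in>units. w * f * unit_inv w = e)) \<and>
     (\<forall>a\<in>\<Lambda>. \<forall>b\<in>\<Lambda>. a * b \<in> \<Lambda>) \<and>
     coxeter_system units S \<and>
     (\<forall>e1\<in>idempotents. \<forall>e2\<in>idempotents. idem_le e1 e2 \<longrightarrow>
        (\<exists>w\<in>units. \<exists>f1\<in>\<Lambda>. \<exists>f2\<in>\<Lambda>. idem_le f1 f2 \<and>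
           w * f1 * unit_inv w = e1 \<and> w * f2 * unit_inv w = e2)) \<and>
     (\<forall>e\<in>\<Lambda>. (\<exists>I\<subseteq>S. W_of e = parabolic I) \<and> (\<exists>J\<subseteq>S. Wstar_of e = parabolic J)) \<and>
     (\<forall>e\<in>\<Lambda>. \<forall>f\<in>\<Lambda>. idem_le e f \<longrightarrow> lambda_star S e \<subseteq> lambda_star S f)"

end

theory Submission imports Defs begin

definition del :: "nat \<Rightarrow> 'a list \<Rightarrow> 'a list" where
  "del j ws = take j ws @ drop (Suc j) ws"

lemma set_del: "set (del j ws) \<subseteq> set ws"
  by (auto simp: del_def dest: in_set_takeD in_set_dropD)

fun Np :: "'a::monoid_mult list \<Rightarrow> 'a \<Rightarrow> bool" where
  "Np [] t = False"
| "Np (s # ws) t = ((t = s) \<noteq> Np ws (s * t * s))"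

lemma Np_append: "Np (xs @ ys) t = (Np xs t \<noteq> Np ys (prod_list (rev xs) * t * prod_list xs))"
  by (induction xs arbitrary: t) (auto simp: mult.assoc)

fun pc :: "(nat \<Rightarrow> bool) \<Rightarrow> nat \<Rightarrow> bool" where
  "pc P 0 = False"
| "pc P (Suc n) = (pc P n \<noteq> P n)"

lemma pc_add: "pc P (m + n) = (pc P m \<noteq> pc (\<lambda>j. P (m + j)) n)"
  by (induction n) auto

lemma pc_Suc0: "pc P (Suc n) = (P 0 \<noteq> pc (\<lambda>j. P (Suc j)) n)"
  using pc_add[of P 1 n] by simp

lemma prod_concat_rep: "prod_list (concat (replicate n [s, t])) = (s * t :: 'a::monoid_mult) ^ n"
  by (induction n) (auto simp: mult.assoc)

lemma prod_rev_concat_rep: "prod_list (rev (concat (replicate n [s, t]))) = (t * s :: 'a::monoid_mult) ^ n"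
proof (induction n)
  case (Suc n)
  have "prod_list (rev (concat (replicate (Suc n) [s, t]))) = (t*s)^n * (t * s)"
    using Suc by (simp add: mult.assoc)
  also have "\<dots> = (t*s)^Suc n" by (simp add: power_commutes)
  finally show ?case .
qed simp

lemma pow_inv: "(x::'a::monoid_mult) * y = 1 \<Longrightarrow> x ^ n * y ^ n = 1"
proof (induction n)
  case (Suc n)
  have "x ^ Suc n * y ^ Suc n = x * (x^n * y^n) * y"
    by (simp add: power_commutes mult.assoc)
  thus ?case using Suc by simp
qed simp

locale cox =
  fixes S :: "'a::monoid_mult set"
  assumes invol: "s \<in> S \<Longrightarrow> s * s = 1"
  and pres: "set ws \<subseteq> S \<Longrightarrow> prod_list ws = 1 \<Longrightarrow> cox_equiv S ws []"
begin

lemma invol2: "s \<in> S \<Longrightarrow> s * (s * a) = a"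
  by (simp add: mult.assoc[symmetric] invol)

lemma rel_Np:
  assumes s: "s \<in> S" and t: "t \<in> S"
  shows "Np (concat (replicate n [s, t])) z = pc (\<lambda>j. z = (s*t)^j * s) (2*n)"
proof (induction n arbitrary: z)
  case 0 then show ?case by simp
next
  case (Suc n)
  let ?x = "s*t"
  have e1: "(s*z*s = t) = (z = ?x^1 * s)"
  proof
    assume "s*z*s = t" 
    hence "s*(s*z*s)*s = s*t*s" by simp
    thus "z = ?x^1 * s" using s by (simp add: mult.assoc invol2 invol)
  next
    assume "z = ?x^1 * s" thus "s*z*s = t" using s by (simp add: mult.assoc invol2 invol)
  qed
  have e2: "(t * s * z * (s * t) = ?x^j * s) = (z = ?x^(Suc (Suc j)) * s)" for j
  proof
    assume "t * s * z * (s * t) = ?x^j * s"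
    hence "s*t*(t * s * z * (s * t))*(t*s) = s*t*(?x^j * s)*(t*s)" by simp
    hence "z = s*t*(?x^j * s)*(t*s)" using s t by (simp add: mult.assoc invol2 invol)
    also have "\<dots> = ?x^(Suc (Suc j)) * s"
      by (simp add: mult.assoc power_commutes[symmetric])
    finally show "z = ?x^(Suc (Suc j)) * s" .
  next
    assume "z = ?x^(Suc (Suc j)) * s"
    hence "z = s*t*(?x^j * s)*(t*s)"
      by (simp add: mult.assoc power_commutes[symmetric])
    thus "t * s * z * (s * t) = ?x^j * s" using s t by (simp add: mult.assoc invol2 invol)
  qed
  have "Np (concat (replicate (Suc n) [s, t])) z
      = (((z = s) \<noteq> (s*z*s = t)) \<noteq> Np (concat (replicate n [s, t])) (t * s * z * (s * t)))"
    by (auto simp add: Np_append mult.assoc)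
  also have "\<dots> = (((z = ?x^0 * s) \<noteq> (z = ?x^1 * s)) \<noteq> pc (\<lambda>j. z = ?x^(Suc (Suc j)) * s) (2*n))"
    using Suc e1 e2 by simp
  also have "\<dots> = pc (\<lambda>j. z = (s*t)^j * s) (2*Suc n)"
    by (auto simp add: pc_Suc0 simp del: pc.simps(2))
  finally show ?case .
qed


lemma rel_props:
  assumes "r \<in> cox_relators S"
  shows "prod_list r = 1 \<and> prod_list (rev r) = 1 \<and> Np r = (\<lambda>_. False)"
proof -
  obtain s t k where r: "r = concat (replicate k [s, t])" and st: "s \<in> S" "t \<in> S"
    and k: "(s*t)^k = 1" using assms unfolding cox_relators_def by blast
  have p1: "prod_list r = 1" using r k by (simp add: prod_concat_rep)
  have "(t*s)^k * (s*t)^k = 1" by (rule pow_inv) (simp add: mult.assoc invol2 invol st)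
  hence p2: "prod_list (rev r) = 1" using r k by (simp add: prod_rev_concat_rep)
  have "pc (\<lambda>j. z = (s*t)^j * s) (k + k) = False" for z
  proof -
    have "(\<lambda>j. z = (s*t)^(k+j) * s) = (\<lambda>j. z = (s*t)^j * s)"
      using k by (simp add: power_add)
    thus ?thesis by (simp add: pc_add)
  qed
  hence "Np r z = False" for z using r rel_Np[OF st, of k z] by (simp add: mult_2)
  thus ?thesis using p1 p2 by auto
qed

lemma equiv_inv:
  "cox_equiv S xs ys \<Longrightarrow> prod_list xs = prod_list ys \<and> prod_list (rev xs) = prod_list (rev ys) \<and> Np xs = Np ys"
proof (induction rule: cox_equiv.induct)
  case (rel r xs ys)
  note R = rel_props[OF rel]
  have "Np (xs @ r @ ys) t = Np (xs @ ys) t" for t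
    using R by (simp add: Np_append mult.assoc)
  thus ?case using R by (auto simp: mult.assoc)
qed auto

lemma prod_rev_inv: "set ws \<subseteq> S \<Longrightarrow> prod_list ws * prod_list (rev ws) = 1"
proof (induction ws)
  case (Cons s ws)
  hence "prod_list ws * (prod_list (rev ws) * s) = s" by (simp add: mult.assoc[symmetric])
  thus ?case using Cons by (simp add: mult.assoc invol)
qed simp

lemma rev_prod_inv: "set ws \<subseteq> S \<Longrightarrow> prod_list (rev ws) * prod_list ws = 1"
  using prod_rev_inv[of "rev ws"] by simp

lemma prod_rev_eq:
  assumes "set xs \<subseteq> S" "set ys \<subseteq> S" "prod_list xs = prod_list ys"
  shows "prod_list (rev xs) = prod_list (rev ys)"
proof -
  have "prod_list (rev xs) = prod_list (rev xs) * (prod_list ys * prod_list (rev ys))"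
    using prod_rev_inv[OF assms(2)] by simp
  also have "\<dots> = (prod_list (rev xs) * prod_list xs) * prod_list (rev ys)"
    using assms(3) by (simp add: mult.assoc)
  also have "\<dots> = prod_list (rev ys)" using rev_prod_inv[OF assms(1)] by simp
  finally show ?thesis .
qed

lemma Np_eq:
  assumes "set xs \<subseteq> S" "set ys \<subseteq> S" "prod_list xs = prod_list ys"
  shows "Np xs = Np ys"
proof
  fix t
  have "prod_list (xs @ rev ys) = 1" using assms prod_rev_inv[OF assms(2)] by simp
  hence "cox_equiv S (xs @ rev ys) []" using assms by (intro pres) auto
  hence a: "Np (xs @ rev ys) t = False" using equiv_inv by fastforce
  have "prod_list (ys @ rev ys) = 1" using prod_rev_inv[OF assms(2)] by simp
  hence "cox_equiv S (ys @ rev ys) []" using assms by (intro pres) auto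
  hence b: "Np (ys @ rev ys) t = False" using equiv_inv by fastforce
  show "Np xs t = Np ys t" using a b prod_rev_eq[OF assms] assms(3) by (simp add: Np_append)
qed

lemma len_le: "set ws \<subseteq> S \<Longrightarrow> cox_length S (prod_list ws) \<le> length ws"
  unfolding cox_length_def by (rule Least_le) auto

lemma reduced_ex:
  assumes "set ws \<subseteq> S"
  shows "\<exists>rs. set rs \<subseteq> S \<and> prod_list rs = prod_list ws \<and> length rs = cox_length S (prod_list ws)"
proof -
  let ?P = "\<lambda>n. \<exists>rs. length rs = n \<and> set rs \<subseteq> S \<and> prod_list rs = prod_list ws"
  have "?P (length ws)" using assms by blast
  hence "?P (LEAST n. ?P n)" by (rule LeastI)
  thus ?thesis unfolding cox_length_def by blast
qed

lemma len_rev_le: "set ws \<subseteq> S \<Longrightarrow> cox_length S (prod_list (rev ws)) \<le> cox_length S (prod_list ws)"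
proof -
  assume ws: "set ws \<subseteq> S"
  then obtain rs where rs: "set rs \<subseteq> S" "prod_list rs = prod_list ws" "length rs = cox_length S (prod_list ws)"
    using reduced_ex by blast
  have "prod_list (rev ws) = prod_list (rev rs)" using prod_rev_eq[OF ws rs(1)] rs(2) by simp
  thus ?thesis using len_le[of "rev rs"] rs by simp
qed

lemma len_rev: "set ws \<subseteq> S \<Longrightarrow> cox_length S (prod_list (rev ws)) = cox_length S (prod_list ws)"
  using len_rev_le[of ws] len_rev_le[of "rev ws"] by simp

lemma deletion:
  "set ws \<subseteq> S \<Longrightarrow> Np ws t \<Longrightarrow> \<exists>j < length ws. t * prod_list ws = prod_list (del j ws)"
proof (induction ws arbitrary: t)
  case Nil then show ?case by simp
next
  case (Cons s ws)
  show ?case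
  proof (cases "t = s")
    case True
    then show ?thesis using Cons.prems by (intro exI[of _ 0]) (simp add: del_def invol2)
  next
    case False
    hence "Np ws (s*t*s)" using Cons.prems by simp
    then obtain j where j: "j < length ws" "s*t*s * prod_list ws = prod_list (del j ws)"
      using Cons by auto
    have "t * prod_list (s # ws) = s * (s*t*s * prod_list ws)"
      using Cons.prems by (simp add: mult.assoc invol2)
    also have "\<dots> = prod_list (del (Suc j) (s # ws))" using j by (simp add: del_def)
    finally show ?thesis using j by (intro exI[of _ "Suc j"]) simp
  qed
qed

lemma exchange:
  assumes s: "s \<in> S" and ws: "set ws \<subseteq> S"
    and le: "cox_length S (s * prod_list ws) \<le> cox_length S (prod_list ws)"
  shows "\<exists>j < length ws. s * prod_list ws = prod_list (del j ws)"
proof -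
  have "Np ws s"
  proof (rule ccontr)
    assume "\<not> Np ws s"
    hence n: "Np (s # ws) s" using s by (simp add: invol2 mult.assoc)
    obtain rs where rs: "set rs \<subseteq> S" "prod_list rs = s * prod_list ws"
        "length rs = cox_length S (s * prod_list ws)"
      using reduced_ex[of "s # ws"] s ws by auto
    have "Np rs = Np (s # ws)" using Np_eq[of rs "s # ws"] rs s ws by auto
    with n have "Np rs s" by simp
    then obtain j where j: "j < length rs" "s * prod_list rs = prod_list (del j rs)"
      using deletion rs(1) by blast
    have "s * prod_list rs = prod_list ws" using rs(2) s by (simp add: invol2)
    hence "cox_length S (prod_list ws) \<le> length (del j rs)"
      using j len_le[of "del j rs"] rs(1) by (auto simp: del_def dest: in_set_takeD in_set_dropD)
    also have "\<dots> < length rs" using j by (simp add: del_def)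
    finally show False using rs(3) le by simp
  qed
  thus ?thesis using deletion ws by blast
qed


lemma red_key:
  assumes I: "I \<subseteq> S" and us: "set us \<subseteq> S" "length us = cox_length S (prod_list us)"
    and minu: "\<And>gs. set gs \<subseteq> I \<Longrightarrow> cox_length S (prod_list us) \<le> cox_length S (prod_list gs * prod_list us)"
  shows "set hs \<subseteq> I \<Longrightarrow> (\<forall>hs'. set hs' \<subseteq> I \<and> prod_list hs' = prod_list hs \<longrightarrow> length hs \<le> length hs')
     \<Longrightarrow> cox_length S (prod_list hs * prod_list us) = length hs + cox_length S (prod_list us)"
proof (induction hs)
  case Nil then show ?case by simp
next
  case (Cons i js)
  let ?u = "prod_list us"
  have iI: "i \<in> I" and jsI: "set js \<subseteq> I" using Cons.prems by auto
  have iS: "i \<in> S" and jsS: "set js \<subseteq> S" using iI jsI I by auto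
  have "\<forall>hs'. set hs' \<subseteq> I \<and> prod_list hs' = prod_list js \<longrightarrow> length js \<le> length hs'"
  proof (intro allI impI)
    fix hs' assume h: "set hs' \<subseteq> I \<and> prod_list hs' = prod_list js"
    hence "set (i # hs') \<subseteq> I \<and> prod_list (i # hs') = prod_list (i # js)" using iI by simp
    thus "length js \<le> length hs'" using Cons.prems(2) by fastforce
  qed
  with Cons.IH jsI have IH: "cox_length S (prod_list js * ?u) = length js + cox_length S ?u" by blast
  have ws: "set (js @ us) \<subseteq> S" using jsS us by auto
  have upper: "cox_length S (prod_list (i # js) * ?u) \<le> Suc (length js) + cox_length S ?u"
    using len_le[of "i # js @ us"] ws iS us(2) by (simp add: mult.assoc)
  have "\<not> cox_length S (i * prod_list (js @ us)) \<le> cox_length S (prod_list (js @ us))"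
  proof
    assume "cox_length S (i * prod_list (js @ us)) \<le> cox_length S (prod_list (js @ us))"
    from exchange[OF iS ws this] obtain j where j: "j < length (js @ us)"
      "i * prod_list (js @ us) = prod_list (del j (js @ us))" by blast
    show False
    proof (cases "j < length js")
      case True
      hence "del j (js @ us) = del j js @ us" by (simp add: del_def)
      with j have "prod_list (i # js) * ?u = prod_list (del j js) * ?u" by (simp add: mult.assoc)
      hence "prod_list (i # js) * ?u * prod_list (rev us) = prod_list (del j js) * ?u * prod_list (rev us)"
        by simp
      hence "prod_list (del j js) = prod_list (i # js)"
        using prod_rev_inv[OF us(1)] by (simp add: mult.assoc)
      moreover have "set (del j js) \<subseteq> I" using jsI by (auto simp: del_def dest: in_set_takeD in_set_dropD)
      ultimately have "length (i # js) \<le> length (del j js)" using Cons.prems(2) by blast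
      thus False using True by (simp add: del_def)
    next
      case False
      define j' where "j' = j - length js"
      have jj: "j' < length us" using j False by (simp add: j'_def)
      hence "del j (js @ us) = js @ del j' us" using False by (simp add: del_def j'_def Suc_diff_le)
      with j have eq: "i * (prod_list js * ?u) = prod_list js * prod_list (del j' us)" by simp
      have "prod_list (rev js @ i # js) * ?u = prod_list (rev js) * (i * (prod_list js * ?u))"
        by (simp add: mult.assoc)
      also have "\<dots> = prod_list (del j' us)" using eq rev_prod_inv[OF jsS] by (simp add: mult.assoc[symmetric])
      finally have "cox_length S ?u \<le> cox_length S (prod_list (del j' us))"
        using minu[of "rev js @ i # js"] jsI iI by auto
      also have "\<dots> \<le> length (del j' us)"
        using len_le[of "del j' us"] us(1) set_del[of j' us] by auto
      also have "\<dots> < length us" using jj by (simp add: del_def)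
      finally show False using us(2) by simp
    qed
  qed
  hence "Suc (length js) + cox_length S ?u \<le> cox_length S (prod_list (i # js) * ?u)"
    using IH by (simp add: mult.assoc)
  thus ?case using upper by simp
qed

lemma right_coset:
  assumes I: "I \<subseteq> S" and ws: "set ws \<subseteq> S"
  shows "\<exists>hs us. set hs \<subseteq> I \<and> set us \<subseteq> S \<and> prod_list ws = prod_list hs * prod_list us \<and>
     (\<forall>gs. set gs \<subseteq> I \<longrightarrow> prod_list gs * prod_list us \<noteq> prod_list us \<longrightarrow>
        cox_length S (prod_list us) < cox_length S (prod_list gs * prod_list us))"
proof -
  obtain g0 where g0: "set g0 \<subseteq> I" and min: "\<And>gs. set gs \<subseteq> I \<Longrightarrow>
      cox_length S (prod_list g0 * prod_list ws) \<le> cox_length S (prod_list gs * prod_list ws)"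
    using ex_has_least_nat[of "\<lambda>gs. set gs \<subseteq> I" "[]" "\<lambda>gs. cox_length S (prod_list gs * prod_list ws)"] by auto
  have g0S: "set g0 \<subseteq> S" using g0 I by auto
  obtain us where us: "set us \<subseteq> S" "prod_list us = prod_list (g0 @ ws)"
      "length us = cox_length S (prod_list (g0 @ ws))"
    using reduced_ex[of "g0 @ ws"] g0S ws by auto
  have w: "prod_list ws = prod_list (rev g0) * prod_list us"
    using us(2) rev_prod_inv[OF g0S] by (simp add: mult.assoc[symmetric])
  have minu: "cox_length S (prod_list us) \<le> cox_length S (prod_list gs * prod_list us)"
    if "set gs \<subseteq> I" for gs
    using min[of "gs @ g0"] min[of g0] that g0 us(2) by (simp add: mult.assoc)
  have key: "cox_length S (prod_list hs * prod_list us) = length hs + cox_length S (prod_list us)"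
    if "set hs \<subseteq> I" "\<forall>hs'. set hs' \<subseteq> I \<and> prod_list hs' = prod_list hs \<longrightarrow> length hs \<le> length hs'" for hs
    using red_key[OF I us(1) _ minu] that us by auto
  have "\<forall>gs. set gs \<subseteq> I \<longrightarrow> prod_list gs * prod_list us \<noteq> prod_list us \<longrightarrow>
        cox_length S (prod_list us) < cox_length S (prod_list gs * prod_list us)"
  proof (intro allI impI)
    fix gs assume gs: "set gs \<subseteq> I" and ne: "prod_list gs * prod_list us \<noteq> prod_list us"
    obtain hs where hs: "set hs \<subseteq> I \<and> prod_list hs = prod_list gs"
      and hmin: "\<And>hs'. set hs' \<subseteq> I \<and> prod_list hs' = prod_list gs \<Longrightarrow> length hs \<le> length hs'"
      using ex_has_least_nat[of "\<lambda>hs. set hs \<subseteq> I \<and> prod_list hs = prod_list gs" gs length] gs by auto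
    have "hs \<noteq> []" using hs ne by auto
    moreover have "cox_length S (prod_list hs * prod_list us) = length hs + cox_length S (prod_list us)"
      using key[of hs] hs hmin by auto
    ultimately show "cox_length S (prod_list us) < cox_length S (prod_list gs * prod_list us)"
      using hs by simp
  qed
  thus ?thesis using w g0 us(1) by (intro exI[of _ "rev g0"] exI[of _ us]) auto
qed

lemma left_coset:
  assumes I: "I \<subseteq> S" and ws: "set ws \<subseteq> S"
  shows "\<exists>hs us. set hs \<subseteq> I \<and> set us \<subseteq> S \<and> prod_list ws = prod_list us * prod_list hs \<and>
     (\<forall>gs. set gs \<subseteq> I \<longrightarrow> prod_list us * prod_list gs \<noteq> prod_list us \<longrightarrow>
        cox_length S (prod_list us) < cox_length S (prod_list us * prod_list gs))"
proof -
  obtain hs us where hs: "set hs \<subseteq> I" and us: "set us \<subseteq> S"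
    and eq: "prod_list (rev ws) = prod_list hs * prod_list us"
    and m: "\<forall>gs. set gs \<subseteq> I \<longrightarrow> prod_list gs * prod_list us \<noteq> prod_list us \<longrightarrow>
        cox_length S (prod_list us) < cox_length S (prod_list gs * prod_list us)"
    using right_coset[OF I, of "rev ws"] ws by auto
  have hsS: "set hs \<subseteq> S" using hs I by auto
  have "prod_list (rev (rev ws)) = prod_list (rev (hs @ us))"
    using prod_rev_eq[of "rev ws" "hs @ us"] ws hsS us eq by auto
  hence e: "prod_list ws = prod_list (rev us) * prod_list (rev hs)" by simp
  have "\<forall>gs. set gs \<subseteq> I \<longrightarrow> prod_list (rev us) * prod_list gs \<noteq> prod_list (rev us) \<longrightarrow>
        cox_length S (prod_list (rev us)) < cox_length S (prod_list (rev us) * prod_list gs)"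
  proof (intro allI impI)
    fix gs assume gs: "set gs \<subseteq> I" and ne: "prod_list (rev us) * prod_list gs \<noteq> prod_list (rev us)"
    have gsS: "set gs \<subseteq> S" using gs I by auto
    have ne': "prod_list (rev gs) * prod_list us \<noteq> prod_list us"
    proof
      assume "prod_list (rev gs) * prod_list us = prod_list us"
      hence "prod_list (rev (rev gs @ us)) = prod_list (rev us)"
        using prod_rev_eq[of "rev gs @ us" us] gsS us by auto
      thus False using ne by simp
    qed
    have "cox_length S (prod_list us) < cox_length S (prod_list (rev gs) * prod_list us)"
      using m ne' gs by auto
    moreover have "cox_length S (prod_list (rev gs) * prod_list us) = cox_length S (prod_list (rev us) * prod_list gs)"
      using len_rev[of "rev gs @ us"] gsS us by simp
    ultimately show "cox_length S (prod_list (rev us)) < cox_length S (prod_list (rev us) * prod_list gs)"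
      using len_rev[OF us] by simp
  qed
  thus ?thesis using e hs us by (intro exI[of _ "rev hs"] exI[of _ "rev us"]) auto
qed


end

lemma units_inv: "u \<in> units \<Longrightarrow> u * unit_inv u = 1 \<and> unit_inv u * u = 1"
proof -
  assume "u \<in> units"
  then obtain v where v: "u * v = 1" "v * u = 1" unfolding units_def by blast
  have "\<exists>!v. u * v = 1 \<and> v * u = 1"
  proof (rule ex1I[of _ v])
    fix v' assume "u * v' = 1 \<and> v' * u = 1"
    hence "v' = v' * (u * v)" using v by simp
    also have "\<dots> = v" using \<open>u * v' = 1 \<and> v' * u = 1\<close> by (simp add: mult.assoc[symmetric])
    finally show "v' = v" .
  qed (use v in auto)
  thus ?thesis unfolding unit_inv_def by (rule theI')
qed

lemma unit_inv_eq: "(u::'a::monoid_mult) * v = 1 \<Longrightarrow> v * u = 1 \<Longrightarrow> unit_inv u = v"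
proof -
  assume v: "u * v = 1" "v * u = 1"
  hence uu: "u \<in> units" unfolding units_def by blast
  have "unit_inv u = unit_inv u * (u * v)" using v by simp
  also have "\<dots> = v" using units_inv[OF uu] by (simp add: mult.assoc[symmetric])
  finally show ?thesis .
qed

lemma unit_inv_unit: "u \<in> units \<Longrightarrow> unit_inv u \<in> units"
  using units_inv unfolding units_def by blast

lemma units_mult: "u \<in> units \<Longrightarrow> v \<in> units \<Longrightarrow> (u::'a::monoid_mult) * v \<in> units"
proof -
  assume u: "u \<in> units" and v: "v \<in> units"
  have "(u * v) * (unit_inv v * unit_inv u) = u * (v * unit_inv v) * unit_inv u"
    by (simp add: mult.assoc)
  also have "\<dots> = 1" using units_inv[OF u] units_inv[OF v] by simp
  finally have 1: "(u * v) * (unit_inv v * unit_inv u) = 1" .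
  have "(unit_inv v * unit_inv u) * (u * v) = unit_inv v * (unit_inv u * u) * v"
    by (simp add: mult.assoc)
  also have "\<dots> = 1" using units_inv[OF u] units_inv[OF v] by simp
  finally have 2: "(unit_inv v * unit_inv u) * (u * v) = 1" .
  from 1 2
  show ?thesis unfolding units_def by blast
qed

lemma unit_inv_one: "unit_inv (1::'a::monoid_mult) = 1"
  by (rule unit_inv_eq) simp_all

lemma cancel_right: "u \<in> units \<Longrightarrow> a * u = b * u \<Longrightarrow> (a::'a::monoid_mult) = b"
proof -
  assume u: "u \<in> units" and e: "a * u = b * u"
  have "a = a * u * unit_inv u" using units_inv[OF u] by (simp add: mult.assoc)
  also have "\<dots> = b" using e units_inv[OF u] by (simp add: mult.assoc)
  finally show ?thesis .
qed

lemma cancel_left: "u \<in> units \<Longrightarrow> u * a = u * b \<Longrightarrow> (a::'a::monoid_mult) = b"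
proof -
  assume u: "u \<in> units" and e: "u * a = u * b"
  have "a = unit_inv u * (u * a)" using units_inv[OF u] by (simp add: mult.assoc[symmetric])
  also have "\<dots> = b" using e units_inv[OF u] by (simp add: mult.assoc[symmetric])
  finally show ?thesis .
qed

lemma W_inv: "a \<in> W_of e \<Longrightarrow> unit_inv a \<in> W_of e"
proof -
  assume a: "a \<in> W_of e"
  hence au: "a \<in> units" and c: "a * e = e * a" unfolding W_of_def by auto
  have "unit_inv a * e = unit_inv a * e * (a * unit_inv a)" using units_inv[OF au] by simp
  also have "\<dots> = unit_inv a * (a * e) * unit_inv a" using c by (simp add: mult.assoc)
  also have "\<dots> = e * unit_inv a" using units_inv[OF au] by (simp add: mult.assoc[symmetric])
  finally show ?thesis using unit_inv_unit[OF au] unfolding W_of_def by blast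
qed

lemma Wstar_inv: "a \<in> Wstar_of e \<Longrightarrow> unit_inv a \<in> Wstar_of e"
proof -
  assume a: "a \<in> Wstar_of e"
  hence au: "a \<in> units" and c: "a * e = e" "e * a = e" unfolding Wstar_of_def by auto
  have "unit_inv a * e = unit_inv a * (a * e)" using c by simp
  also have "\<dots> = e" using units_inv[OF au] by (simp add: mult.assoc[symmetric])
  finally have 1: "unit_inv a * e = e" .
  have "e * unit_inv a = e * a * unit_inv a" using c by simp
  also have "\<dots> = e" using units_inv[OF au] by (simp add: mult.assoc)
  finally show ?thesis using 1 unit_inv_unit[OF au] unfolding Wstar_of_def by blast
qed

lemma ex1_triple:
  "P a b c \<Longrightarrow> (\<And>x y z. P x y z \<Longrightarrow> (x, y, z) = (a, b, c)) \<Longrightarrow> \<exists>!(x, y, z). P x y z"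
proof (rule ex1I[of _ "(a, b, c)"])
  assume p: "P a b c" and u: "\<And>x y z. P x y z \<Longrightarrow> (x, y, z) = (a, b, c)"
  show "case (a, b, c) of (x, y, z) \<Rightarrow> P x y z" using p by simp
  fix t assume "case t of (x, y, z) \<Rightarrow> P x y z"
  then obtain x y z where "t = (x, y, z)" "P x y z" by (cases t) auto
  thus "t = (a, b, c)" using u by simp
qed

lemma min_left_eq:
  "min_left_coset S x H \<Longrightarrow> min_left_coset S y H \<Longrightarrow> h \<in> H \<Longrightarrow> y = x * h \<Longrightarrow> h' \<in> H \<Longrightarrow> x = y * h' \<Longrightarrow> x = y"
proof (rule ccontr)
  assume m: "min_left_coset S x H" "min_left_coset S y H" "h \<in> H" "y = x * h" "h' \<in> H" "x = y * h'" and ne: "x \<noteq> y"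
  have "y \<in> (\<lambda>h. x * h) ` H" using m(3,4) by blast
  hence 1: "cox_length S x < cox_length S y" using m(1) ne unfolding min_left_coset_def by auto
  have "x \<in> (\<lambda>h. y * h) ` H" using m(5,6) by blast
  hence "cox_length S y < cox_length S x" using m(2) ne unfolding min_left_coset_def by auto
  thus False using 1 by simp
qed

lemma min_right_eq:
  "min_right_coset S x H \<Longrightarrow> min_right_coset S y H \<Longrightarrow> h \<in> H \<Longrightarrow> y = h * x \<Longrightarrow> h' \<in> H \<Longrightarrow> x = h' * y \<Longrightarrow> x = y"
proof (rule ccontr)
  assume m: "min_right_coset S x H" "min_right_coset S y H" "h \<in> H" "y = h * x" "h' \<in> H" "x = h' * y" and ne: "x \<noteq> y"
  have "y \<in> (\<lambda>h. h * x) ` H" using m(3,4) by blast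
  hence 1: "cox_length S x < cox_length S y" using m(1) ne unfolding min_right_coset_def by auto
  have "x \<in> (\<lambda>h. h * y) ` H" using m(5,6) by blast
  hence "cox_length S y < cox_length S x" using m(2) ne unfolding min_right_coset_def by auto
  thus False using 1 by simp
qed


lemma ecs2_eq:
  assumes G: "gen_renner_coxeter \<Lambda> S" and e: "e \<in> idempotents"
    and f1: "f1 \<in> \<Lambda>" "w1 \<in> units" "w1 * f1 * unit_inv w1 = e"
    and f2: "f2 \<in> \<Lambda>" "w2 \<in> units" "w2 * f2 * unit_inv w2 = e"
  shows "f1 = f2"
proof -
  have "\<exists>!f. f \<in> \<Lambda> \<and> (\<exists>w\<in>units. w * f * unit_inv w = e)"
    using G e unfolding gen_renner_coxeter_def by blast
  thus ?thesis using f1 f2 by blast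
qed

lemma key_unique:
  assumes G: "gen_renner_coxeter \<Lambda> S" and e: "e \<in> \<Lambda>" and e': "e' \<in> \<Lambda>"
    and a: "a \<in> units" and b: "b \<in> units" and eq: "e = a * e' * b"
  shows "e' = e \<and> a \<in> W_of e \<and> a * b \<in> Wstar_of e"
proof -
  have LE: "\<Lambda> \<subseteq> idempotents" using G unfolding gen_renner_coxeter_def by blast
  have comm0: "\<forall>x\<in>idempotents. \<forall>y\<in>idempotents. x * y = (y * x :: 'a)"
    using G unfolding gen_renner_coxeter_def factorisable_def by (elim conjE) assumption
  hence comm: "\<And>x y. x \<in> idempotents \<Longrightarrow> y \<in> idempotents \<Longrightarrow> x * y = y * (x::'a)" by blast
  have ecs4: "\<And>e1 e2 :: 'a. e1 \<in> idempotents \<Longrightarrow> e2 \<in> idempotents \<Longrightarrow> idem_le e1 e2 \<Longrightarrow>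
        (\<exists>w\<in>units. \<exists>f1\<in>\<Lambda>. \<exists>f2\<in>\<Lambda>. idem_le f1 f2 \<and>
           w * f1 * unit_inv w = e1 \<and> w * f2 * unit_inv w = e2)"
    using G unfolding gen_renner_coxeter_def by blast
  have ee: "e * e = e" and ee': "e' * e' = e'" using LE e e' unfolding idempotents_def by auto
  have eE: "e \<in> idempotents" using LE e by auto
  define ai where "ai = unit_inv a"
  define bi where "bi = unit_inv b"
  have A: "a * ai = 1" "ai * a = 1" using units_inv[OF a] ai_def by auto
  have B: "b * bi = 1" "bi * b = 1" using units_inv[OF b] bi_def by auto
  define f where "f = a * e' * ai"
  have ff: "f * f = f"
  proof -
    have "f * f = a * e' * (ai * a) * e' * ai" by (simp add: f_def mult.assoc)
    also have "\<dots> = a * (e' * e') * ai" using A by (simp add: mult.assoc)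
    also have "\<dots> = f" using ee' by (simp add: f_def)
    finally show ?thesis .
  qed
  have e'eq: "e' = ai * e * bi"
  proof -
    have "ai * e * bi = (ai * a) * e' * (b * bi)" using eq by (simp add: mult.assoc)
    thus ?thesis using A B by simp
  qed
  have f2: "f = e * bi * ai"
  proof -
    have "f = (a * ai) * e * bi * ai" using e'eq by (simp add: f_def mult.assoc)
    thus ?thesis using A by simp
  qed
  have f3: "e = f * (a * b)"
  proof -
    have "f * (a * b) = a * e' * (ai * a) * b" by (simp add: f_def mult.assoc)
    thus ?thesis using A eq by simp
  qed
  have "e * f = f" using f2 ee by (simp add: mult.assoc[symmetric])
  moreover have "f * e = e"
  proof -
    have "f * e = (f * f) * (a * b)" using f3 by (simp add: mult.assoc)
    thus ?thesis using ff f3 by simp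
  qed
  moreover have "e * f = f * e" using comm eE ff unfolding idempotents_def by blast
  ultimately have fe: "f = e" by simp
  have "e' = e"
  proof (rule ecs2_eq[OF G eE e' a _ e])
    show "a * e' * unit_inv a = e" using fe f_def ai_def by simp
    show "1 \<in> units" unfolding units_def by auto
    show "1 * e * unit_inv 1 = e" by (simp add: unit_inv_one)
  qed
  have ae: "a * e = e * a"
  proof -
    have h: "a * e * ai = e" using fe f_def \<open>e' = e\<close> by simp
    have "e * a = a * e * ai * a" by (simp add: h)
    also have "\<dots> = a * e" using A by (simp add: mult.assoc)
    finally show ?thesis by simp
  qed
  define c where "c = a * b"
  have cu: "c \<in> units" using units_mult[OF a b] c_def by simp
  define ci where "ci = unit_inv c"
  have C: "c * ci = 1" "ci * c = 1" using units_inv[OF cu] ci_def by auto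
  have ec: "e * c = e"
  proof -
    have "e * c = e * a * b" by (simp add: c_def mult.assoc)
    also have "\<dots> = a * e * b" using ae by simp
    also have "\<dots> = e" using eq \<open>e' = e\<close> by simp
    finally show ?thesis .
  qed
  have eci: "e * ci = e"
  proof -
    have "e * ci = e * c * ci" using ec by simp
    thus ?thesis using C by (simp add: mult.assoc)
  qed
  define g where "g = ci * e * c"
  have gg: "g * g = g"
  proof -
    have "g * g = ci * e * (c * ci) * e * c" by (simp add: g_def mult.assoc)
    also have "\<dots> = ci * (e * e) * c" using C by (simp add: mult.assoc)
    finally show ?thesis using ee by (simp add: g_def)
  qed
  hence gE: "g \<in> idempotents" unfolding idempotents_def by simp
  have eg: "e * g = e"
  proof -
    have "e * g = (e * ci) * e * c" by (simp add: g_def mult.assoc)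
    thus ?thesis using eci ee ec by simp
  qed
  have ge: "g * e = e" using eg comm[OF gE eE] by simp
  have "idem_le e g" unfolding idem_le_def using eg ge by simp
  then obtain w f1 f2 where w: "w \<in> units" and f1: "f1 \<in> \<Lambda>" and f2': "f2 \<in> \<Lambda>"
    and wf1: "w * f1 * unit_inv w = e" and wf2: "w * f2 * unit_inv w = g"
    using ecs4[OF eE gE] by blast
  have one: "1 \<in> (units :: 'a set)" unfolding units_def by auto
  have "f1 = e" by (rule ecs2_eq[OF G eE f1 w wf1 e one]) (simp add: unit_inv_one)
  have ciu: "ci \<in> units" using unit_inv_unit[OF cu] ci_def by simp
  have "unit_inv ci = c" using unit_inv_eq[OF C(2) C(1)] .
  hence "ci * e * unit_inv ci = g" by (simp add: g_def)
  hence "f2 = e" by (rule ecs2_eq[OF G gE f2' w wf2 e ciu])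
  hence "g = w * e * unit_inv w" using wf2 by simp
  also have "\<dots> = e" using wf1 \<open>f1 = e\<close> by simp
  finally have "g = e" .
  have ce: "c * e = e * c"
  proof -
    have "c * e = c * g" using \<open>g = e\<close> by simp
    also have "\<dots> = (c * ci) * e * c" by (simp add: g_def mult.assoc)
    finally show ?thesis using C by simp
  qed
  have "a \<in> W_of e" using a ae unfolding W_of_def by blast
  moreover have "a * b \<in> Wstar_of e" using cu ce ec unfolding Wstar_of_def c_def by auto
  ultimately show ?thesis using \<open>e' = e\<close> by simp
qed


lemma uinvL: "u \<in> units \<Longrightarrow> unit_inv u * (u * x) = x"
  using units_inv[of u] by (simp add: mult.assoc[symmetric])

lemma uinvR: "u \<in> units \<Longrightarrow> u * (unit_inv u * x) = x"
  using units_inv[of u] by (simp add: mult.assoc[symmetric])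

lemma W_mult: "x \<in> W_of e \<Longrightarrow> y \<in> W_of e \<Longrightarrow> x * y \<in> W_of e"
proof -
  assume x: "x \<in> W_of e" and y: "y \<in> W_of e"
  hence xu: "x \<in> units" "x * e = e * x" and yu: "y \<in> units" "y * e = e * y" unfolding W_of_def by auto
  have "x * y * e = x * (y * e)" by (simp add: mult.assoc)
  also have "\<dots> = (x * e) * y" using yu by (simp add: mult.assoc)
  also have "\<dots> = e * (x * y)" using xu by (simp add: mult.assoc)
  finally show ?thesis using units_mult[OF xu(1) yu(1)] unfolding W_of_def by blast
qed

lemma Wstar_W: "x \<in> Wstar_of e \<Longrightarrow> x \<in> W_of e"
  unfolding W_of_def Wstar_of_def by auto

lemma uniq_common:
  assumes G: "gen_renner_coxeter \<Lambda> S" and e: "e \<in> \<Lambda>" and e': "e' \<in> \<Lambda>"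
    and u: "w1 \<in> units" "w2 \<in> units" "w1' \<in> units" "w2' \<in> units"
    and eq: "w1 * e * w2 = w1' * e' * w2'"
  shows "\<exists>a b. e' = e \<and> a \<in> W_of e \<and> a * b \<in> Wstar_of e \<and> a \<in> units \<and> b \<in> units \<and>
      w1' = w1 * a \<and> w2' = b * w2"
proof -
  define a where "a = unit_inv w1 * w1'"
  define b where "b = w2' * unit_inv w2"
  have au: "a \<in> units" using units_mult unit_inv_unit u a_def by blast
  have bu: "b \<in> units" using units_mult unit_inv_unit u b_def by blast
  have "e = unit_inv w1 * (w1 * e * w2) * unit_inv w2"
    using u units_inv[of w2] by (simp add: mult.assoc uinvL)
  also have "\<dots> = a * e' * b" using eq by (simp add: a_def b_def mult.assoc)
  finally have "e' = e \<and> a \<in> W_of e \<and> a * b \<in> Wstar_of e" using key_unique[OF G e e' au bu] by blast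
  moreover have "w1' = w1 * a" using u by (simp add: a_def uinvR)
  moreover have "w2' = b * w2" using u units_inv[of w2] by (simp add: b_def mult.assoc)
  ultimately show ?thesis using au bu by blast
qed

lemma uniq1:
  assumes G: "gen_renner_coxeter \<Lambda> S" and e: "e \<in> \<Lambda>" and e': "e' \<in> \<Lambda>"
    and u: "w1 \<in> units" "w2 \<in> units" "w1' \<in> units" "w2' \<in> units"
    and m: "min_left_coset S w1 (Wstar_of e)" "min_right_coset S w2 (W_of e)"
    and m': "min_left_coset S w1' (Wstar_of e')" "min_right_coset S w2' (W_of e')"
    and eq: "w1 * e * w2 = w1' * e' * w2'"
  shows "(w1', e', w2') = (w1, e, w2)"
proof -
  obtain a b where ab: "e' = e" "a \<in> W_of e" "a * b \<in> Wstar_of e" "a \<in> units" "b \<in> units"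
      "w1' = w1 * a" "w2' = b * w2"
    using uniq_common[OF G e e' u eq] by blast
  have "b = unit_inv a * (a * b)" using ab(4) by (simp add: uinvL)
  hence bW: "b \<in> W_of e" using W_mult[OF W_inv[OF ab(2)] Wstar_W[OF ab(3)]] by simp
  have w2i: "w2 = unit_inv b * w2'" using ab(5) by (simp add: ab(7) uinvL)
  have m2': "min_right_coset S w2' (W_of e)" using m'(2) ab(1) by simp
  have w2: "w2 = w2'" by (rule min_right_eq[OF m(2) m2' bW ab(7) W_inv[OF bW] w2i])
  have "b * w2 = 1 * w2" using ab(7) w2 by simp
  hence "b = 1" using cancel_right u(2) by blast
  hence aS: "a \<in> Wstar_of e" using ab(3) by simp
  have w1i: "w1 = w1' * unit_inv a" using units_inv[OF ab(4)] by (simp add: ab(6) mult.assoc)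
  have m1': "min_left_coset S w1' (Wstar_of e)" using m'(1) ab(1) by simp
  have "w1 = w1'" by (rule min_left_eq[OF m(1) m1' aS ab(6) Wstar_inv[OF aS] w1i])
  thus ?thesis using w2 ab(1) by simp
qed

lemma uniq2:
  assumes G: "gen_renner_coxeter \<Lambda> S" and e: "e \<in> \<Lambda>" and e': "e' \<in> \<Lambda>"
    and u: "w1 \<in> units" "w2 \<in> units" "w1' \<in> units" "w2' \<in> units"
    and m: "min_left_coset S w1 (W_of e)" "min_right_coset S w2 (Wstar_of e)"
    and m': "min_left_coset S w1' (W_of e')" "min_right_coset S w2' (Wstar_of e')"
    and eq: "w1 * e * w2 = w1' * e' * w2'"
  shows "(w1', e', w2') = (w1, e, w2)"
proof -
  obtain a b where ab: "e' = e" "a \<in> W_of e" "a * b \<in> Wstar_of e" "a \<in> units" "b \<in> units"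
      "w1' = w1 * a" "w2' = b * w2"
    using uniq_common[OF G e e' u eq] by blast
  have w1i: "w1 = w1' * unit_inv a" using units_inv[OF ab(4)] by (simp add: ab(6) mult.assoc)
  have m1': "min_left_coset S w1' (W_of e)" using m'(1) ab(1) by simp
  have w1: "w1 = w1'" by (rule min_left_eq[OF m(1) m1' ab(2) ab(6) W_inv[OF ab(2)] w1i])
  have "w1 * a = w1 * 1" using ab(6) w1 by simp
  hence "a = 1" using cancel_left u(1) by blast
  hence bS: "b \<in> Wstar_of e" using ab(3) by simp
  have w2i: "w2 = unit_inv b * w2'" using ab(5) by (simp add: ab(7) uinvL)
  have m2': "min_right_coset S w2' (Wstar_of e)" using m'(2) ab(1) by simp
  have "w2 = w2'" by (rule min_right_eq[OF m(2) m2' bS ab(7) Wstar_inv[OF bS] w2i])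
  thus ?thesis using w1 ab(1) by simp
qed


theorem mainTheorem9:
  fixes \<Lambda> S :: "'a::monoid_mult set"
  assumes "gen_renner_coxeter \<Lambda> S"
  shows "\<forall>r::'a.
      (\<exists>!(w1, e, w2). e \<in> \<Lambda> \<and> w1 \<in> units \<and> w2 \<in> units \<and>
          min_left_coset S w1 (Wstar_of e) \<and> min_right_coset S w2 (W_of e) \<and>
          r = w1 * e * w2) \<and>
      (\<exists>!(v1, e, v2). e \<in> \<Lambda> \<and> v1 \<in> units \<and> v2 \<in> units \<and>
          min_left_coset S v1 (W_of e) \<and> min_right_coset S v2 (Wstar_of e) \<and>
          r = v1 * e * v2)"
proof
  fix r :: 'a
  note G = assms
  have cs: "coxeter_system units S" using G unfolding gen_renner_coxeter_def by (elim conjE) assumption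
  have inv: "\<forall>s\<in>S. s \<noteq> 1 \<and> s * s = 1"
    and words: "\<forall>w\<in>units. \<exists>ws. set ws \<subseteq> S \<and> prod_list ws = w"
    and inU: "\<forall>ws. set ws \<subseteq> S \<longrightarrow> prod_list ws \<in> units"
    and pr: "\<forall>ws. set ws \<subseteq> S \<and> prod_list ws = 1 \<longrightarrow> cox_equiv S ws []"
    using cs unfolding coxeter_system_def by auto
  interpret cox S by unfold_locales (use inv pr in auto)
  have fac1: "(UNIV :: 'a set) = {e * g | e g. e \<in> idempotents \<and> g \<in> units}"
    using G unfolding gen_renner_coxeter_def factorisable_def by (elim conjE) assumption
  have ecs2: "\<forall>e\<in>(idempotents :: 'a set). \<exists>!f. f \<in> \<Lambda> \<and> (\<exists>w\<in>units. w * f * unit_inv w = e)"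
    using G unfolding gen_renner_coxeter_def by (elim conjE) assumption
  have ecs5: "\<forall>e\<in>\<Lambda>. (\<exists>I\<subseteq>S. W_of e = parabolic I) \<and> (\<exists>J\<subseteq>S. Wstar_of e = parabolic J)"
    using G unfolding gen_renner_coxeter_def by (elim conjE) assumption
  have "r \<in> {e * g | e g. e \<in> idempotents \<and> g \<in> units}" by (subst fac1[symmetric]) simp
  then obtain e0 g where r0: "r = e0 * g" and e0: "e0 \<in> idempotents" and g: "g \<in> units"
    by blast
  obtain f w where f: "f \<in> \<Lambda>" and w: "w \<in> units" and wf: "w * f * unit_inv w = e0"
    using ecs2 e0 by blast
  define u0 where "u0 = unit_inv w * g"
  have u0u: "u0 \<in> units" using units_mult[OF unit_inv_unit[OF w] g] u0_def by simp
  have rf: "r = w * f * u0" using r0 wf[symmetric] by (simp add: u0_def mult.assoc)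
  have e5: "(\<exists>I\<subseteq>S. W_of f = parabolic I) \<and> (\<exists>J\<subseteq>S. Wstar_of f = parabolic J)"
    using bspec[OF ecs5 f] .
  then obtain I where I: "I \<subseteq> S" "W_of f = parabolic I" by (elim conjE exE) 
  obtain J where J: "J \<subseteq> S" "Wstar_of f = parabolic J" using e5 by (elim conjE exE)
  obtain ws where ws: "set ws \<subseteq> S" "prod_list ws = w" using bspec[OF words w] by (elim exE conjE)
  obtain us0 where us0: "set us0 \<subseteq> S" "prod_list us0 = u0" using bspec[OF words u0u] by (elim exE conjE)
  have parI: "set hs \<subseteq> K \<Longrightarrow> prod_list hs \<in> parabolic K" for hs K
    unfolding parabolic_def by blast
  have part: "x \<in> (\<lambda>h. h * y) ` parabolic K \<Longrightarrow> \<exists>gs. set gs \<subseteq> K \<and> x = prod_list gs * y" for x y K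
    unfolding parabolic_def by blast
  have parl: "x \<in> (\<lambda>h. y * h) ` parabolic K \<Longrightarrow> \<exists>gs. set gs \<subseteq> K \<and> x = y * prod_list gs" for x y K
    unfolding parabolic_def by blast
  show "(\<exists>!(w1, e, w2). e \<in> \<Lambda> \<and> w1 \<in> units \<and> w2 \<in> units \<and>
          min_left_coset S w1 (Wstar_of e) \<and> min_right_coset S w2 (W_of e) \<and>
          r = w1 * e * w2) \<and>
      (\<exists>!(v1, e, v2). e \<in> \<Lambda> \<and> v1 \<in> units \<and> v2 \<in> units \<and>
          min_left_coset S v1 (W_of e) \<and> min_right_coset S v2 (Wstar_of e) \<and>
          r = v1 * e * v2)"
  proof
    obtain hs us2 where hs: "set hs \<subseteq> I" and us2: "set us2 \<subseteq> S"
      and u0e: "u0 = prod_list hs * prod_list us2"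
      and m2: "\<forall>gs. set gs \<subseteq> I \<longrightarrow> prod_list gs * prod_list us2 \<noteq> prod_list us2 \<longrightarrow>
        cox_length S (prod_list us2) < cox_length S (prod_list gs * prod_list us2)"
      using right_coset[OF I(1) us0(1)] us0(2) by auto
    have yW: "prod_list hs \<in> W_of f" using I(2) parI[OF hs] by simp
    hence yc: "prod_list hs * f = f * prod_list hs" unfolding W_of_def by simp
    have wsh: "set (ws @ hs) \<subseteq> S" using ws hs I by auto
    obtain ks us1 where ks: "set ks \<subseteq> J" and us1: "set us1 \<subseteq> S"
      and wye: "prod_list (ws @ hs) = prod_list us1 * prod_list ks"
      and m1: "\<forall>gs. set gs \<subseteq> J \<longrightarrow> prod_list us1 * prod_list gs \<noteq> prod_list us1 \<longrightarrow>
        cox_length S (prod_list us1) < cox_length S (prod_list us1 * prod_list gs)"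
      using left_coset[OF J(1) wsh] by auto
    have xW: "prod_list ks \<in> Wstar_of f" using J(2) parI[OF ks] by simp
    hence xf: "prod_list ks * f = f" unfolding Wstar_of_def by simp
    have "r = w * (f * prod_list hs) * prod_list us2" using rf u0e by (simp add: mult.assoc)
    also have "\<dots> = prod_list (ws @ hs) * f * prod_list us2" using yc ws by (simp add: mult.assoc)
    also have "\<dots> = prod_list us1 * (prod_list ks * f) * prod_list us2" using wye by (simp add: mult.assoc)
    finally have req: "r = prod_list us1 * f * prod_list us2" using xf by simp
    have ml: "min_left_coset S (prod_list us1) (Wstar_of f)"
proof (unfold min_left_coset_def J(2), intro ballI impI)
      fix x assume x1: "x \<in> (\<lambda>h. prod_list us1 * h) ` parabolic J" and x2: "x \<noteq> prod_list us1"
      obtain gs where gs: "set gs \<subseteq> J" "x = prod_list us1 * prod_list gs" using parl[OF x1] by (elim exE conjE)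
      show "cox_length S (prod_list us1) < cox_length S x" using m1 gs x2 by simp
    qed
    have mr: "min_right_coset S (prod_list us2) (W_of f)"
proof (unfold min_right_coset_def I(2), intro ballI impI)
      fix x assume x1: "x \<in> (\<lambda>h. h * prod_list us2) ` parabolic I" and x2: "x \<noteq> prod_list us2"
      obtain gs where gs: "set gs \<subseteq> I" "x = prod_list gs * prod_list us2" using part[OF x1] by (elim exE conjE)
      show "cox_length S (prod_list us2) < cox_length S x" using m2 gs x2 by simp
    qed
    show "\<exists>!(w1, e, w2). e \<in> \<Lambda> \<and> w1 \<in> units \<and> w2 \<in> units \<and>
          min_left_coset S w1 (Wstar_of e) \<and> min_right_coset S w2 (W_of e) \<and>
          r = w1 * e * w2"
    proof (rule ex1_triple)
      show "f \<in> \<Lambda> \<and> prod_list us1 \<in> units \<and> prod_list us2 \<in> units \<and>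
          min_left_coset S (prod_list us1) (Wstar_of f) \<and> min_right_coset S (prod_list us2) (W_of f) \<and>
          r = prod_list us1 * f * prod_list us2"
        using f inU us1 us2 ml mr req by (intro conjI) simp_all
      fix x y z assume h: "y \<in> \<Lambda> \<and> x \<in> units \<and> z \<in> units \<and>
          min_left_coset S x (Wstar_of y) \<and> min_right_coset S z (W_of y) \<and> r = x * y * z"
      show "(x, y, z) = (prod_list us1, f, prod_list us2)"
      proof -
        have hy: "y \<in> \<Lambda>" "x \<in> units" "z \<in> units" "min_left_coset S x (Wstar_of y)"
            "min_right_coset S z (W_of y)" "r = x * y * z" using h by blast+
        have eq: "prod_list us1 * f * prod_list us2 = x * y * z" using hy(6) req by simp
        have u1: "prod_list us1 \<in> units" using inU us1 by blast
        have u2: "prod_list us2 \<in> units" using inU us2 by blast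
        show ?thesis by (rule uniq1[OF G f hy(1) u1 u2 hy(2) hy(3) ml mr hy(4) hy(5) eq])
      qed
    qed
  next
    obtain hs vs1 where hs: "set hs \<subseteq> I" and vs1: "set vs1 \<subseteq> S"
      and we: "w = prod_list vs1 * prod_list hs"
      and m1: "\<forall>gs. set gs \<subseteq> I \<longrightarrow> prod_list vs1 * prod_list gs \<noteq> prod_list vs1 \<longrightarrow>
        cox_length S (prod_list vs1) < cox_length S (prod_list vs1 * prod_list gs)"
      using left_coset[OF I(1) ws(1)] ws(2) by auto
    have yW: "prod_list hs \<in> W_of f" using I(2) parI[OF hs] by simp
    hence yc: "prod_list hs * f = f * prod_list hs" unfolding W_of_def by simp
    have hsu: "set (hs @ us0) \<subseteq> S" using us0 hs I by auto
    obtain ks vs2 where ks: "set ks \<subseteq> J" and vs2: "set vs2 \<subseteq> S"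
      and yue: "prod_list (hs @ us0) = prod_list ks * prod_list vs2"
      and m2: "\<forall>gs. set gs \<subseteq> J \<longrightarrow> prod_list gs * prod_list vs2 \<noteq> prod_list vs2 \<longrightarrow>
        cox_length S (prod_list vs2) < cox_length S (prod_list gs * prod_list vs2)"
      using right_coset[OF J(1) hsu] by auto
    have xW: "prod_list ks \<in> Wstar_of f" using J(2) parI[OF ks] by simp
    hence xf: "f * prod_list ks = f" unfolding Wstar_of_def by simp
    have "r = prod_list vs1 * (prod_list hs * f) * u0" using rf we by (simp add: mult.assoc)
    also have "\<dots> = prod_list vs1 * f * prod_list (hs @ us0)" using yc us0 by (simp add: mult.assoc)
    also have "\<dots> = prod_list vs1 * (f * prod_list ks) * prod_list vs2" using yue by (simp add: mult.assoc)
    finally have req: "r = prod_list vs1 * f * prod_list vs2" using xf by simp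
    have ml: "min_left_coset S (prod_list vs1) (W_of f)"
proof (unfold min_left_coset_def I(2), intro ballI impI)
      fix x assume x1: "x \<in> (\<lambda>h. prod_list vs1 * h) ` parabolic I" and x2: "x \<noteq> prod_list vs1"
      obtain gs where gs: "set gs \<subseteq> I" "x = prod_list vs1 * prod_list gs" using parl[OF x1] by (elim exE conjE)
      show "cox_length S (prod_list vs1) < cox_length S x" using m1 gs x2 by simp
    qed
    have mr: "min_right_coset S (prod_list vs2) (Wstar_of f)"
proof (unfold min_right_coset_def J(2), intro ballI impI)
      fix x assume x1: "x \<in> (\<lambda>h. h * prod_list vs2) ` parabolic J" and x2: "x \<noteq> prod_list vs2"
      obtain gs where gs: "set gs \<subseteq> J" "x = prod_list gs * prod_list vs2" using part[OF x1] by (elim exE conjE)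
      show "cox_length S (prod_list vs2) < cox_length S x" using m2 gs x2 by simp
    qed
    show "\<exists>!(v1, e, v2). e \<in> \<Lambda> \<and> v1 \<in> units \<and> v2 \<in> units \<and>
          min_left_coset S v1 (W_of e) \<and> min_right_coset S v2 (Wstar_of e) \<and>
          r = v1 * e * v2"
    proof (rule ex1_triple)
      show "f \<in> \<Lambda> \<and> prod_list vs1 \<in> units \<and> prod_list vs2 \<in> units \<and>
          min_left_coset S (prod_list vs1) (W_of f) \<and> min_right_coset S (prod_list vs2) (Wstar_of f) \<and>
          r = prod_list vs1 * f * prod_list vs2"
        using f inU vs1 vs2 ml mr req by (intro conjI) simp_all
      fix x y z assume h: "y \<in> \<Lambda> \<and> x \<in> units \<and> z \<in> units \<and>
          min_left_coset S x (W_of y) \<and> min_right_coset S z (Wstar_of y) \<and> r = x * y * z"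
      show "(x, y, z) = (prod_list vs1, f, prod_list vs2)"
      proof -
        have hy: "y \<in> \<Lambda>" "x \<in> units" "z \<in> units" "min_left_coset S x (W_of y)"
            "min_right_coset S z (Wstar_of y)" "r = x * y * z" using h by blast+
        have eq: "prod_list vs1 * f * prod_list vs2 = x * y * z" using hy(6) req by simp
        have u1: "prod_list vs1 \<in> units" using inU vs1 by blast
        have u2: "prod_list vs2 \<in> units" using inU vs2 by blast
        show ?thesis by (rule uniq2[OF G f hy(1) u1 u2 hy(2) hy(3) ml mr hy(4) hy(5) eq])
      qed
    qed
  qed
qed

end
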